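(* Let $\mathcal{O}_K$ be a Dedekind domain and let $\mathfrak{n}$ be a composite ideal of $\mathcal{O}_K$. Then $\mathfrak{n}$ is a Carmichael ideal of $\mathcal{O}_K$ if and only if all of the following hold: (1) $\mathfrak{n}$ is square-free; (2) $N_K(\mathfrak{n})$ is finite; (3) $N_K(\mathfrak{p})-1$ divides $N_K(\mathfrak{n})-1$ for every prime ideal $\mathfrak{p}$ dividing $\mathfrak{n}$.
   Context: For an ideal $\mathfrak{n}$ of $\mathcal{O}_K$, $N_K(\mathfrak{n})=|\mathcal{O}_K/\mathfrak{n}|$. A composite ideal means a nonzero proper ideal that is not a prime ideal. A finite ring $S$ is a Carmichael ring if $S$ is not a field and $a^{|S|}=a$ for every $a\in S$; an ideal $I$ of a ring $R$ is a Carmichael ideal if $R/I$ is a Carmichael ring. Square-free means that in the prime ideal factorization of $\mathfrak{n}$ every exponent equals $1$. *)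

theory Defs
  imports "HOL-Algebra.Algebra"
begin

text \<open>Integrally closed domain, stated intrinsically: whenever a fraction a/b (b nonzero)
  is a root of a monic polynomial with coefficients in R, i.e.
  a^n + sum_{i<n} c_i a^i b^(n-i) = 0, then b divides a.\<close>
definition integrally_closed :: "('a, 'b) ring_scheme \<Rightarrow> bool" where
  "integrally_closed R \<longleftrightarrow>
     (\<forall>a\<in>carrier R. \<forall>b\<in>carrier R. b \<noteq> \<zero>\<^bsub>R\<^esub> \<longrightarrow>
        (\<exists>n::nat. n > 0 \<and> (\<exists>c::nat \<Rightarrow> 'a. (\<forall>i<n. c i \<in> carrier R) \<and>
            a [^]\<^bsub>R\<^esub> n \<oplus>\<^bsub>R\<^esub>
              finsum R (\<lambda>i. c i \<otimes>\<^bsub>R\<^esub> (a [^]\<^bsub>R\<^esub> i) \<otimes>\<^bsub>R\<^esub> (b [^]\<^bsub>R\<^esub> (n - i))) {..<n}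
            = \<zero>\<^bsub>R\<^esub>))
        \<longrightarrow> (\<exists>x\<in>carrier R. a = b \<otimes>\<^bsub>R\<^esub> x))"

definition dedekind_domain :: "('a, 'b) ring_scheme \<Rightarrow> bool" where
  "dedekind_domain R \<longleftrightarrow> noetherian_domain R \<and> integrally_closed R \<and>
     (\<forall>P. primeideal P R \<and> P \<noteq> {\<zero>\<^bsub>R\<^esub>} \<longrightarrow> maximalideal P R)"

definition composite_ideal :: "'a set \<Rightarrow> ('a, 'b) ring_scheme \<Rightarrow> bool" where
  "composite_ideal I R \<longleftrightarrow> ideal I R \<and> I \<noteq> {\<zero>\<^bsub>R\<^esub>} \<and> I \<noteq> carrier R \<and> \<not> primeideal I R"

text \<open>Absolute norm N(I) = |R/I| (as a natural number; meaningful when finite).\<close>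
definition ideal_norm :: "('a, 'b) ring_scheme \<Rightarrow> 'a set \<Rightarrow> nat" where
  "ideal_norm R I = card (carrier (R Quot I))"

definition finite_norm :: "('a, 'b) ring_scheme \<Rightarrow> 'a set \<Rightarrow> bool" where
  "finite_norm R I \<longleftrightarrow> finite (carrier (R Quot I))"

definition ideal_dvd :: "('a, 'b) ring_scheme \<Rightarrow> 'a set \<Rightarrow> 'a set \<Rightarrow> bool" where
  "ideal_dvd R P N \<longleftrightarrow> (\<exists>J. ideal J R \<and> N = P \<cdot>\<^bsub>R\<^esub> J)"

text \<open>Square-free: the prime factorization of N has all exponents 1, i.e. N is the product
  of a list of pairwise distinct nonzero prime ideals.\<close>
definition squarefree_ideal :: "('a, 'b) ring_scheme \<Rightarrow> 'a set \<Rightarrow> bool" where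
  "squarefree_ideal R N \<longleftrightarrow>
     (\<exists>ps. distinct ps \<and> (\<forall>P\<in>set ps. primeideal P R \<and> P \<noteq> {\<zero>\<^bsub>R\<^esub>}) \<and>
           N = foldr (ideal_prod R) ps (carrier R))"

definition carmichael_ring :: "('a, 'b) ring_scheme \<Rightarrow> bool" where
  "carmichael_ring S \<longleftrightarrow> finite (carrier S) \<and> \<not> field S \<and>
     (\<forall>a\<in>carrier S. a [^]\<^bsub>S\<^esub> card (carrier S) = a)"

definition carmichael_ideal :: "'a set \<Rightarrow> ('a, 'b) ring_scheme \<Rightarrow> bool" where
  "carmichael_ideal I R \<longleftrightarrow> carmichael_ring (R Quot I)"

end

theory Submission
  imports Defs
begin


lemma (in field) korselt_field:
  assumes fin: "finite (carrier R)" and m: "m \<ge> (1::nat)"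
  shows "(\<forall>x\<in>carrier R. x [^] m = x) \<longleftrightarrow> (card (carrier R) - 1) dvd (m - 1)"
proof -
  interpret G: group "Multiplicative_Group.mult_of R" by (rule field_mult_group)
  have ord: "order (Multiplicative_Group.mult_of R) = card (carrier R) - 1"
    using order_mult_of[OF fin] by (simp add: order_def)
  have powG: "x [^]\<^bsub>Multiplicative_Group.mult_of R\<^esub> (n::nat) = x [^] n" for x n
    by (simp add: Multiplicative_Group.mult_of_def nat_pow_def)
  have key: "x [^] m = x \<longleftrightarrow> x [^] (m - 1) = \<one>" if "x \<in> carrier R" "x \<noteq> \<zero>" for x
  proof -
    have "x [^] m = x [^] (m - 1) \<otimes> x" using m
      by (metis Suc_diff_le diff_Suc_1 nat_pow_Suc)
    moreover have "x [^] (m-1) \<otimes> x = \<one> \<otimes> x \<longleftrightarrow> x [^] (m-1) = \<one>"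
      using that by (metis m_rcancel nat_pow_closed one_closed)
    ultimately show ?thesis using that by simp
  qed
  show ?thesis
  proof
    assume H: "\<forall>x\<in>carrier R. x [^] m = x"
    obtain g where g: "g \<in> carrier (Multiplicative_Group.mult_of R)" "carrier (Multiplicative_Group.mult_of R) = {g[^]i | i::nat . i \<in> UNIV}"
      using finite_field_mult_group_has_gen[OF fin] by blast
    have finG: "finite (carrier (Multiplicative_Group.mult_of R))" using fin by (simp add: finite_mult_of)
    have "g [^] (m-1) = \<one>" using key g H by auto
    hence d: "G.ord g dvd (m-1)" using G.pow_eq_id[OF g(1)] by (simp add: powG)
    have o1: "G.ord g \<ge> 1" using G.ord_ge_1[OF finG g(1)] .
    have "carrier (Multiplicative_Group.mult_of R) = {g[^]\<^bsub>Multiplicative_Group.mult_of R\<^esub> x | x. x \<in> {0 .. G.ord g - 1}}"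
      using g(2) G.ord_elems[OF finG g(1)] by (simp add: powG)
    also have "\<dots> = (\<lambda>x. g[^]\<^bsub>Multiplicative_Group.mult_of R\<^esub> x) ` {0 .. G.ord g - 1}" by auto
    finally have "card (carrier (Multiplicative_Group.mult_of R)) \<le> card {0 .. G.ord g - 1}"
      by (metis card_image_le finite_atLeastAtMost)
    hence "order (Multiplicative_Group.mult_of R) \<le> G.ord g" using o1 by (simp add: order_def)
    moreover have "G.ord g \<le> order (Multiplicative_Group.mult_of R)" using G.ord_le_group_order[OF finG g(1)] .
    ultimately have "G.ord g = card (carrier R) - 1" using ord by simp
    thus "(card (carrier R) - 1) dvd (m - 1)" using d by simp
  next
    assume D: "(card (carrier R) - 1) dvd (m - 1)"
    show "\<forall>x\<in>carrier R. x [^] m = x"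
    proof
      fix x assume x: "x \<in> carrier R"
      show "x [^] m = x"
      proof (cases "x = \<zero>")
        case True thus ?thesis using m by (simp add: nat_pow_zero)
      next
        case False
        have xg: "x \<in> carrier (Multiplicative_Group.mult_of R)" using x False by simp
        have "x [^]\<^bsub>Multiplicative_Group.mult_of R\<^esub> order (Multiplicative_Group.mult_of R) = \<one>\<^bsub>Multiplicative_Group.mult_of R\<^esub>"
          by (rule G.pow_order_eq_1[OF xg])
        hence "G.ord x dvd order (Multiplicative_Group.mult_of R)" using G.pow_eq_id[OF xg] by simp
        hence "G.ord x dvd (m - 1)" using D ord by (metis dvd_trans)
        hence "x [^] (m-1) = \<one>" using G.pow_eq_id[OF xg] by (simp add: powG)
        thus ?thesis using key x False by simp
      qed
    qed
  qed
qed



context ring begin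

lemma quot_carrier: "carrier (R Quot I) = (\<lambda>a. I +> a) ` carrier R"
  by (auto simp: FactRing_def A_RCOSETS_def')

lemma quot_pow:
  assumes "ideal I R" "a \<in> carrier R"
  shows "(I +> a) [^]\<^bsub>R Quot I\<^esub> (n::nat) = I +> (a [^] n)"
proof (induction n)
  case 0
  then show ?case by (simp add: FactRing_def)
next
  case (Suc n)
  have "(I +> a) [^]\<^bsub>R Quot I\<^esub> Suc n = (I +> a) [^]\<^bsub>R Quot I\<^esub> n \<otimes>\<^bsub>R Quot I\<^esub> (I +> a)"
    by simp
  also have "\<dots> = I +> (a [^] n \<otimes> a)"
    using Suc ideal.rcoset_mult_add[OF assms(1)] assms(2) by (simp add: FactRing_def)
  finally show ?case by simp
qed

lemma quot_finite_mono:
  assumes "ideal I R" "ideal J R" "I \<subseteq> J" "finite (carrier (R Quot I))"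
  shows "finite (carrier (R Quot J))"
proof -
  define g where "g C = J +> (SOME a. a \<in> carrier R \<and> C = I +> a)" for C
  have "carrier (R Quot J) \<subseteq> g ` carrier (R Quot I)"
  proof
    fix Y assume "Y \<in> carrier (R Quot J)"
    then obtain a where a: "a \<in> carrier R" "Y = J +> a" by (auto simp: quot_carrier)
    define b where "b = (SOME b. b \<in> carrier R \<and> I +> a = I +> b)"
    have b: "b \<in> carrier R \<and> I +> a = I +> b"
      unfolding b_def by (rule someI[of _ a]) (use a in auto)
    hence "b \<ominus> a \<in> I" using quotient_eq_iff_same_a_r_cos[OF assms(1)] a by auto
    hence "J +> b = J +> a" using quotient_eq_iff_same_a_r_cos[OF assms(2)] a b assms(3) by auto
    moreover have "g (I +> a) = J +> b" unfolding g_def b_def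
      by (metis (no_types, lifting))
    ultimately show "Y \<in> g ` carrier (R Quot I)" using a by (auto simp: quot_carrier)
  qed
  thus ?thesis using assms(4) finite_surj by blast
qed

end



context cring begin

lemma set_add_sub1:
  assumes "ideal I R" "ideal J R" shows "I \<subseteq> I <+> J"
proof
  fix x assume "x \<in> I"
  moreover have "\<zero> \<in> J" using assms(2) by (simp add: additive_subgroup.zero_closed ideal.axioms(1))
  moreover have "x = x \<oplus> \<zero>" using `x \<in> I` ideal.Icarr[OF assms(1)] by simp
  ultimately show "x \<in> I <+> J" unfolding set_add_def' by blast
qed

lemma set_add_sub2:
  assumes "ideal I R" "ideal J R" shows "J \<subseteq> I <+> J"
proof
  fix x assume "x \<in> J"
  moreover have "\<zero> \<in> I" using assms(1) by (simp add: additive_subgroup.zero_closed ideal.axioms(1))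
  moreover have "x = \<zero> \<oplus> x" using `x \<in> J` ideal.Icarr[OF assms(2)] by simp
  ultimately show "x \<in> I <+> J" unfolding set_add_def' by blast
qed

lemma foldr_ideal:
  "(\<forall>P\<in>set ps. ideal P R) \<Longrightarrow> ideal (foldr (ideal_prod R) ps (carrier R)) R"
  by (induction ps) (auto intro: oneideal ideal_prod_is_ideal)

lemma foldr_prime:
  assumes "primeideal P R" "\<forall>Q\<in>set Qs. ideal Q R" "foldr (ideal_prod R) Qs (carrier R) \<subseteq> P"
  shows "\<exists>Q\<in>set Qs. Q \<subseteq> P"
  using assms(2,3)
proof (induction Qs)
  case Nil
  have "carrier R \<subseteq> P" using Nil by simp
  moreover have "P \<subseteq> carrier R" using ideal.Icarr[OF primeideal.axioms(1)[OF assms(1)]] by blast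
  ultimately have "P = carrier R" by blast
  then show ?case using primeideal.I_notcarr[OF assms(1)] by simp
next
  case (Cons Q Qs)
  have "Q \<subseteq> P \<or> foldr (ideal_prod R) Qs (carrier R) \<subseteq> P"
    using primeideal_divides_ideal_prod[OF assms(1)] Cons.prems foldr_ideal[of Qs] by auto
  thus ?case using Cons by auto
qed

lemma comax_foldr:
  assumes "maximalideal P R" "\<forall>Q\<in>set Qs. maximalideal Q R" "P \<notin> set Qs"
  shows "P <+> foldr (ideal_prod R) Qs (carrier R) = carrier R"
proof -
  let ?J = "foldr (ideal_prod R) Qs (carrier R)"
  have iP: "ideal P R" using assms(1) maximalideal.axioms(1) by blast
  have iQ: "\<forall>Q\<in>set Qs. ideal Q R" using assms(2) maximalideal.axioms(1) by blast
  have iJ: "ideal ?J R" using foldr_ideal iQ by blast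
  have iK: "ideal (P <+> ?J) R" using add_ideals iP iJ by blast
  have sub: "P <+> ?J \<subseteq> carrier R" using ideal.Icarr[OF iK] by blast
  have "P <+> ?J = P \<or> P <+> ?J = carrier R"
    using maximalideal.I_maximal[OF assms(1) iK set_add_sub1[OF iP iJ] sub] .
  moreover have "P <+> ?J \<noteq> P"
  proof
    assume "P <+> ?J = P"
    hence "?J \<subseteq> P" using set_add_sub2[OF iP iJ] by auto
    then obtain Q where Q: "Q \<in> set Qs" "Q \<subseteq> P"
      using foldr_prime[OF maximalideal_prime[OF assms(1)] iQ] by blast
    have mQ: "maximalideal Q R" using assms(2) Q(1) by blast
    have hP: "P \<subseteq> carrier R" using ideal.Icarr[OF iP] by blast
    have "P = Q \<or> P = carrier R"
      by (rule maximalideal.I_maximal[OF mQ iP Q(2) hP])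
    thus False using Q assms(3) maximalideal.I_notcarr[OF assms(1)] by auto
  qed
  ultimately show ?thesis by blast
qed

lemma foldr_inter:
  assumes "distinct ps" "\<forall>Q\<in>set ps. maximalideal Q R"
  shows "foldr (ideal_prod R) ps (carrier R) = carrier R \<inter> \<Inter>(set ps)"
  using assms
proof (induction ps)
  case Nil
  then show ?case by simp
next
  case (Cons P ps)
  let ?J = "foldr (ideal_prod R) ps (carrier R)"
  have iP: "ideal P R" using Cons.prems maximalideal.axioms(1) by auto
  have iJ: "ideal ?J R" using foldr_ideal Cons.prems maximalideal.axioms(1) by auto
  have e1: "P \<cdot> ?J = P \<inter> ?J"
    using ideal_prod_eq_inter[OF iP iJ comax_foldr] Cons.prems by auto
  have e2: "?J = carrier R \<inter> \<Inter>(set ps)" using Cons.IH Cons.prems by simp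
  have hP: "P \<subseteq> carrier R" using ideal.Icarr[OF iP] by blast
  have "foldr (ideal_prod R) (P # ps) (carrier R) = P \<cdot> ?J" by simp
  also have "\<dots> = P \<inter> (carrier R \<inter> \<Inter>(set ps))" using e1 e2 by simp
  also have "\<dots> = carrier R \<inter> \<Inter>(set (P # ps))" using hP by auto
  finally show ?case .
qed

end



context cring begin


lemma fin_ideals:
  assumes iN: "ideal N R" and fin: "finite (carrier (R Quot N))"
  shows "finite {J. ideal J R \<and> N \<subseteq> J}"
proof -
  have "{J. ideal J R \<and> N \<subseteq> J} \<subseteq> Union ` Pow (carrier (R Quot N))"
  proof
    fix J assume "J \<in> {J. ideal J R \<and> N \<subseteq> J}"
    hence iJ: "ideal J R" and NJ: "N \<subseteq> J" by auto
    have "J = \<Union>{C \<in> carrier (R Quot N). C \<subseteq> J}"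
    proof
      show "J \<subseteq> \<Union>{C \<in> carrier (R Quot N). C \<subseteq> J}"
      proof
        fix a assume a: "a \<in> J"
        have ac: "a \<in> carrier R" using a ideal.Icarr[OF iJ] by blast
        have z: "\<zero> \<in> N" using iN by (simp add: additive_subgroup.zero_closed ideal.axioms(1))
        have "a \<in> N +> a" using z ac unfolding a_r_coset_def' by force
        moreover have "N +> a \<subseteq> J"
          using a NJ iJ unfolding a_r_coset_def' by (auto intro: additive_subgroup.a_closed[OF ideal.axioms(1)[OF iJ]])
        moreover have "N +> a \<in> carrier (R Quot N)" using ac by (simp add: quot_carrier)
        ultimately show "a \<in> \<Union>{C \<in> carrier (R Quot N). C \<subseteq> J}" by blast
      qed
    qed blast
    thus "J \<in> Union ` Pow (carrier (R Quot N))" by blast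
  qed
  thus ?thesis using fin finite_subset by blast
qed

lemma jacobson_fin:
  assumes iN: "ideal N R" and fin: "finite (carrier (R Quot N))" and m: "m \<ge> (2::nat)"
    and ferm: "\<forall>a\<in>carrier R. a [^] m \<ominus> a \<in> N"
    and x: "x \<in> carrier R" and xM: "\<forall>M. maximalideal M R \<and> N \<subseteq> M \<longrightarrow> x \<in> M"
  shows "x \<in> N"
proof (rule ccontr)
  assume xN: "x \<notin> N"
  define e where "e = x [^] (m - 1)"
  have ec: "e \<in> carrier R" using x by (simp add: e_def)
  have xe: "x \<otimes> e = x [^] m" using x m unfolding e_def
    by (metis Suc_diff_1 less_le_trans nat_pow_Suc2 pos2)
  define I where "I = set_add R N (PIdl (\<one> \<ominus> e))"
  have oe: "\<one> \<ominus> e \<in> carrier R" using ec by simp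
  have iP: "ideal (PIdl (\<one> \<ominus> e)) R" using cgenideal_ideal[OF oe] .
  have iI: "ideal I R" unfolding I_def using add_ideals[OF iN iP] .
  have NI: "N \<subseteq> I"
  proof
    fix y assume "y \<in> N"
    moreover have "\<zero> \<in> PIdl (\<one> \<ominus> e)" using iP by (simp add: additive_subgroup.zero_closed ideal.axioms(1))
    moreover have "y = y \<oplus> \<zero>" using \<open>y \<in> N\<close> ideal.Icarr[OF iN] by simp
    ultimately show "y \<in> I" unfolding I_def set_add_def' by blast
  qed
  have eI: "\<one> \<ominus> e \<in> I"
  proof -
    have "\<one> \<ominus> e \<in> PIdl (\<one> \<ominus> e)" using cgenideal_self[OF oe] .
    moreover have "\<zero> \<in> N" using iN by (simp add: additive_subgroup.zero_closed ideal.axioms(1))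
    moreover have "\<one> \<ominus> e = \<zero> \<oplus> (\<one> \<ominus> e)" using oe by simp
    ultimately show ?thesis unfolding I_def set_add_def' by blast
  qed
  show False
  proof (cases "I = carrier R")
    case True
    hence "\<one> \<in> I" by simp
    then obtain n y where n: "n \<in> N" and y: "y \<in> PIdl (\<one> \<ominus> e)" and one: "\<one> = n \<oplus> y"
      unfolding I_def set_add_def' by blast
    obtain r where r: "r \<in> carrier R" and yr: "y = r \<otimes> (\<one> \<ominus> e)"
      using y unfolding cgenideal_def by blast
    have nc: "n \<in> carrier R" using n ideal.Icarr[OF iN] by blast
    have "x = x \<otimes> n \<oplus> r \<otimes> \<ominus> (x [^] m \<ominus> x)"
    proof -
      have "x = x \<otimes> (n \<oplus> r \<otimes> (\<one> \<ominus> e))" using one yr x by simp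
      also have "\<dots> = x \<otimes> n \<oplus> r \<otimes> \<ominus> (x \<otimes> e \<ominus> x)" using x nc r ec by algebra
      finally show ?thesis using xe by simp
    qed
    moreover have "x \<otimes> n \<in> N" using n x iN by (simp add: ideal.I_l_closed)
    moreover have "r \<otimes> \<ominus> (x [^] m \<ominus> x) \<in> N"
    proof -
      have "x [^] m \<ominus> x \<in> N" using ferm x by blast
      hence "\<ominus> (x [^] m \<ominus> x) \<in> N" using iN
        by (simp add: additive_subgroup.a_inv_closed ideal.axioms(1))
      thus ?thesis using r iN by (simp add: ideal.I_l_closed)
    qed
    ultimately have "x \<in> N" using additive_subgroup.a_closed[OF ideal.axioms(1)[OF iN]] by metis
    thus False using xN by simp
  next
    case False
    define A where "A = {J. ideal J R \<and> I \<subseteq> J \<and> J \<noteq> carrier R}"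
    have "A \<subseteq> {J. ideal J R \<and> N \<subseteq> J}" using NI unfolding A_def by auto
    hence finA: "finite A" using fin_ideals[OF iN fin] finite_subset by blast
    have "I \<in> A" using iI False unfolding A_def by auto
    then obtain M where M: "M \<in> A" and Mmax: "\<forall>J\<in>A. M \<subseteq> J \<longrightarrow> J = M"
      using finite_has_maximal[OF finA] by blast
    have iM: "ideal M R" and IM: "I \<subseteq> M" and Mc: "M \<noteq> carrier R" using M unfolding A_def by auto
    have mM: "maximalideal M R"
    proof (rule maximalidealI[OF iM])
      show "carrier R \<noteq> M" using Mc by simp
      fix J
      assume iJ: "ideal J R" and MJ: "M \<subseteq> J"
      show "J = M \<or> J = carrier R"
      proof (cases "J = carrier R")
        case False
        hence "J \<in> A" using iJ MJ IM unfolding A_def by auto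
        thus ?thesis using Mmax MJ by blast
      qed simp
    qed
    have NM: "N \<subseteq> M" using NI IM by (rule subset_trans)
    have xMm: "x \<in> M" using spec[OF xM, of M] mM NM by blast
    have mm: "m - 1 = Suc (m-2)" using m by arith
    moreover have "e = x [^] (m-2) \<otimes> x" unfolding e_def mm by (rule nat_pow_Suc)
    ultimately have "e \<in> M" using x iM xMm by (simp add: ideal.I_l_closed)
    moreover have "\<one> \<ominus> e \<in> M" using eI IM by blast
    ultimately have "(\<one> \<ominus> e) \<oplus> e \<in> M" using additive_subgroup.a_closed[OF ideal.axioms(1)[OF iM]] by blast
    moreover have "(\<one> \<ominus> e) \<oplus> e = \<one>" using ec by algebra
    ultimately have "M = carrier R" using ideal.one_imp_carrier[OF iM] by simp
    thus False using Mc by simp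
  qed
qed

end

context domain begin

lemma main_dom:
  assumes maxi: "\<And>P. primeideal P R \<Longrightarrow> P \<noteq> {\<zero>} \<Longrightarrow> maximalideal P R"
    and comp: "composite_ideal N R"
  shows "carmichael_ideal N R \<longleftrightarrow>
           squarefree_ideal R N \<and> finite_norm R N \<and>
           (\<forall>P. primeideal P R \<and> ideal_dvd R P N \<longrightarrow>
                (ideal_norm R P - 1) dvd (ideal_norm R N - 1))"
proof -
  have cr: "cring R" by (rule is_cring)
  have iN: "ideal N R" and N0: "N \<noteq> {\<zero>}" and Nc: "N \<noteq> carrier R" and Np: "\<not> primeideal N R"
    using comp unfolding composite_ideal_def by auto
  have Ncar: "N \<subseteq> carrier R" using ideal.Icarr[OF iN] by blast
  have zN: "\<zero> \<in> N" using iN by (simp add: additive_subgroup.zero_closed ideal.axioms(1))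
  define m where "m = card (carrier (R Quot N))"
  have cos_eq: "\<And>I a b. ideal I R \<Longrightarrow> a \<in> carrier R \<Longrightarrow> b \<in> carrier R \<Longrightarrow>
      (I +> a = I +> b) = (a \<ominus> b \<in> I)"
    using quotient_eq_iff_same_a_r_cos by blast
  have prime_part: "(card (carrier (R Quot P)) - 1) dvd (m - 1) \<longleftrightarrow>
        (\<forall>a\<in>carrier R. a [^] m \<ominus> a \<in> P)"
    if P: "maximalideal P R" "N \<subseteq> P" and fin: "finite (carrier (R Quot N))" for P
  proof -
    have iP: "ideal P R" using P(1) maximalideal.axioms(1) by blast
    interpret F: field "R Quot P" using maximalideal.quotient_is_field[OF P(1) cr] .
    have finP: "finite (carrier (R Quot P))" using quot_finite_mono[OF iN iP P(2) fin] .
    have m1: "m \<ge> 1" unfolding m_def using fin quot_carrier[of N]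
      by (metis One_nat_def Suc_leI card_gt_0_iff empty_iff image_is_empty zero_closed)
    have "(card (carrier (R Quot P)) - 1) dvd (m - 1) \<longleftrightarrow>
           (\<forall>x\<in>carrier (R Quot P). x [^]\<^bsub>R Quot P\<^esub> m = x)"
      using F.korselt_field[OF finP m1] by simp
    also have "\<dots> \<longleftrightarrow> (\<forall>a\<in>carrier R. a [^] m \<ominus> a \<in> P)"
    proof -
      have "(P +> a) [^]\<^bsub>R Quot P\<^esub> m = P +> a \<longleftrightarrow> a [^] m \<ominus> a \<in> P" if "a \<in> carrier R" for a
        using quot_pow[OF iP that] cos_eq[OF iP] that by simp
      thus ?thesis by (auto simp: quot_carrier)
    qed
    finally show ?thesis .
  qed
  show ?thesis
  proof
    assume C: "carmichael_ideal N R"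
    hence fin: "finite (carrier (R Quot N))" and nf: "\<not> field (R Quot N)"
      and pw: "\<forall>x\<in>carrier (R Quot N). x [^]\<^bsub>R Quot N\<^esub> m = x"
      unfolding carmichael_ideal_def carmichael_ring_def m_def by auto
    have ferm: "\<forall>a\<in>carrier R. a [^] m \<ominus> a \<in> N"
    proof
      fix a assume a: "a \<in> carrier R"
      have "(N +> a) [^]\<^bsub>R Quot N\<^esub> m = N +> a" using pw a by (simp add: quot_carrier)
      thus "a [^] m \<ominus> a \<in> N" using quot_pow[OF iN a] cos_eq[OF iN] a by simp
    qed
    have m2: "m \<ge> 2"
    proof -
      have "N +> \<one> \<noteq> N +> \<zero>"
      proof
        assume "N +> \<one> = N +> \<zero>"
        hence "\<one> \<ominus> \<zero> \<in> N" using cos_eq[OF iN] by simp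
        moreover have "\<one> \<ominus> \<zero> = \<one>" by algebra
        ultimately have "\<one> \<in> N" by simp
        thus False using ideal.one_imp_carrier[OF iN] Nc by simp
      qed
      moreover have "{N +> \<one>, N +> \<zero>} \<subseteq> carrier (R Quot N)" by (simp add: quot_carrier)
      ultimately have "card {N +> \<one>, N +> \<zero>} \<le> m" unfolding m_def using fin card_mono by blast
      thus ?thesis using \<open>N +> \<one> \<noteq> N +> \<zero>\<close> by simp
    qed
    have div: "\<forall>P. primeideal P R \<and> ideal_dvd R P N \<longrightarrow>
                (ideal_norm R P - 1) dvd (ideal_norm R N - 1)"
    proof (intro allI impI)
      fix P assume H: "primeideal P R \<and> ideal_dvd R P N"
      then obtain J where iJ: "ideal J R" and NPJ: "N = P \<cdot> J" unfolding ideal_dvd_def by blast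
      have iP: "ideal P R" using H primeideal.axioms(1) by blast
      have NP: "N \<subseteq> P" using ideal_prod_inter[OF iP iJ] NPJ by blast
      have "P \<noteq> {\<zero>}" using NP N0 zN by blast
      hence mP: "maximalideal P R" using maxi H by blast
      have "\<forall>a\<in>carrier R. a [^] m \<ominus> a \<in> P" using ferm NP by blast
      hence "(card (carrier (R Quot P)) - 1) dvd (m - 1)" using prime_part[OF mP NP fin] by blast
      thus "(ideal_norm R P - 1) dvd (ideal_norm R N - 1)" unfolding ideal_norm_def m_def .
    qed
    define S where "S = {M. maximalideal M R \<and> N \<subseteq> M}"
    have finS: "finite S"
    proof -
      have "S \<subseteq> {J. ideal J R \<and> N \<subseteq> J}" unfolding S_def using maximalideal.axioms(1) by blast
      thus ?thesis using fin_ideals[OF iN fin] finite_subset by blast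
    qed
    have NS: "N = carrier R \<inter> \<Inter>S"
    proof
      show "N \<subseteq> carrier R \<inter> \<Inter>S" using Ncar unfolding S_def by blast
      show "carrier R \<inter> \<Inter>S \<subseteq> N"
      proof
        fix x assume x: "x \<in> carrier R \<inter> \<Inter>S"
        show "x \<in> N"
        proof (rule jacobson_fin[OF iN fin m2 ferm])
          show "x \<in> carrier R" using x by blast
          show "\<forall>M. maximalideal M R \<and> N \<subseteq> M \<longrightarrow> x \<in> M" using x unfolding S_def by blast
        qed
      qed
    qed
    obtain ps where ps: "set ps = S" "distinct ps" using finite_distinct_list[OF finS] by blast
    have psmax: "\<forall>Q\<in>set ps. maximalideal Q R" using ps unfolding S_def by blast
    have "foldr (ideal_prod R) ps (carrier R) = N" using foldr_inter[OF ps(2) psmax] ps(1) NS by simp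
    moreover have "\<forall>P\<in>set ps. primeideal P R \<and> P \<noteq> {\<zero>}"
    proof
      fix P assume P: "P \<in> set ps"
      hence "primeideal P R" using psmax maximalideal_prime by blast
      moreover have "N \<subseteq> P" using P ps unfolding S_def by blast
      hence "P \<noteq> {\<zero>}" using N0 zN by blast
      ultimately show "primeideal P R \<and> P \<noteq> {\<zero>}" by blast
    qed
    ultimately have "squarefree_ideal R N" unfolding squarefree_ideal_def using ps(2) by metis
    thus "squarefree_ideal R N \<and> finite_norm R N \<and>
           (\<forall>P. primeideal P R \<and> ideal_dvd R P N \<longrightarrow>
                (ideal_norm R P - 1) dvd (ideal_norm R N - 1))"
      using fin div unfolding finite_norm_def by blast
  next
    assume H: "squarefree_ideal R N \<and> finite_norm R N \<and>
           (\<forall>P. primeideal P R \<and> ideal_dvd R P N \<longrightarrow>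
                (ideal_norm R P - 1) dvd (ideal_norm R N - 1))"
    then obtain ps where ps: "distinct ps" "\<forall>P\<in>set ps. primeideal P R \<and> P \<noteq> {\<zero>}"
      and Nps: "N = foldr (ideal_prod R) ps (carrier R)"
      unfolding squarefree_ideal_def by blast
    have fin: "finite (carrier (R Quot N))" using H unfolding finite_norm_def by blast
    have div: "\<And>P. primeideal P R \<Longrightarrow> ideal_dvd R P N \<Longrightarrow> (card (carrier (R Quot P)) - 1) dvd (m - 1)"
      using H unfolding ideal_norm_def m_def by blast
    have psmax: "\<forall>Q\<in>set ps. maximalideal Q R" using ps maxi by blast
    have NI: "N = carrier R \<inter> \<Inter>(set ps)" using foldr_inter[OF ps(1) psmax] Nps by simp
    have inP: "a [^] m \<ominus> a \<in> P" if P: "P \<in> set ps" and a: "a \<in> carrier R" for P a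
    proof -
      have mP: "maximalideal P R" using psmax P by blast
      have iP: "ideal P R" using mP maximalideal.axioms(1) by blast
      have NP: "N \<subseteq> P" using NI P by blast
      let ?qs = "remove1 P ps"
      have qsd: "distinct ?qs" using ps(1) by simp
      have qsset: "set ?qs = set ps - {P}" using ps(1) by (simp add: set_remove1_eq)
      have qsmax: "\<forall>Q\<in>set ?qs. maximalideal Q R" using psmax qsset by blast
      let ?J = "foldr (ideal_prod R) ?qs (carrier R)"
      have iJ: "ideal ?J R" using foldr_ideal qsmax maximalideal.axioms(1) by blast
      have "P \<cdot> ?J = P \<inter> ?J"
        using ideal_prod_eq_inter[OF iP iJ comax_foldr[OF mP qsmax]] qsset by blast
      also have "\<dots> = P \<inter> (carrier R \<inter> \<Inter>(set ?qs))" using foldr_inter[OF qsd qsmax] by simp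
      also have "\<dots> = N" using NI qsset P by blast
      finally have "ideal_dvd R P N" unfolding ideal_dvd_def using iJ by metis
      hence "(card (carrier (R Quot P)) - 1) dvd (m - 1)"
        using div mP maximalideal_prime by blast
      thus ?thesis using prime_part[OF mP NP fin] a by blast
    qed
    show "carmichael_ideal N R"
      unfolding carmichael_ideal_def carmichael_ring_def
    proof (intro conjI)
      show "finite (carrier (R Quot N))" by (rule fin)
      show "\<not> field (R Quot N)"
      proof
        assume "field (R Quot N)"
        hence "domain (R Quot N)" by (simp add: field.axioms(1))
        thus False using quot_domain_imp_primeideal[OF iN] Np by blast
      qed
      show "\<forall>a\<in>carrier (R Quot N). a [^]\<^bsub>R Quot N\<^esub> card (carrier (R Quot N)) = a"
      proof
        fix x assume "x \<in> carrier (R Quot N)"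
        then obtain a where a: "a \<in> carrier R" and xa: "x = N +> a" by (auto simp: quot_carrier)
        have "a [^] m \<ominus> a \<in> N" using NI inP a by auto
        hence "N +> a [^] m = N +> a" using cos_eq[OF iN] a by simp
        thus "x [^]\<^bsub>R Quot N\<^esub> card (carrier (R Quot N)) = x"
          using quot_pow[OF iN a] xa unfolding m_def by simp
      qed
    qed
  qed
qed

end

theorem theorem3p1:
  fixes R :: "('a, 'b) ring_scheme" and N :: "'a set"
  assumes "dedekind_domain R"
    and "composite_ideal N R"
  shows "carmichael_ideal N R \<longleftrightarrow>
           squarefree_ideal R N \<and> finite_norm R N \<and>
           (\<forall>P. primeideal P R \<and> ideal_dvd R P N \<longrightarrow>
                (ideal_norm R P - 1) dvd (ideal_norm R N - 1))"
proof -
  have dom: "domain R" using assms(1) unfolding dedekind_domain_def noetherian_domain_def by blast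
  show ?thesis
  proof (rule domain.main_dom[OF dom _ assms(2)])
    fix P assume "primeideal P R" "P \<noteq> {\<zero>\<^bsub>R\<^esub>}"
    thus "maximalideal P R" using assms(1) unfolding dedekind_domain_def by blast
  qed
qed


end
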